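(* Let $d\in\mathbb{N}$ and $m_1,\dots,m_{2d}\in\mathbb{Z}$ with $m_i>0$ for all $i\neq 2d$ and $m_{2d}\geq 0$. Then $\mathsf{C}\mathsf{W}(m_1,\dots,m_{2d})\mathsf{E}$ has five distinct real eigenvalues whose absolute values are also pairwise distinct, and the eigenvalue of largest absolute value is $$s+\tfrac12\sqrt{5s^2+4ts+4}+\tfrac12\sqrt{9s^2+4ts+4s\sqrt{5s^2+4ts+4}},$$ where $t=\operatorname{tr}(W_1(m_1,\dots,m_{2d}))$ and $s=\operatorname{tr}^*(W_1(m_1,\dots,m_{2d}))$.
   Context: $A_1=\begin{pmatrix}1&1\\0&1\end{pmatrix}$, $B_1=\begin{pmatrix}1&0\\1&1\end{pmatrix}$, $W_1(m_1,\dots,m_{2d})=\prod_{i=1}^dA_1^{m_{2i-1}}B_1^{m_{2i}}$. Let $\mathsf{A}=\begin{pmatrix}1&1&0&0&2\\0&1&0&0&0\\0&0&1&1&0\\0&0&0&1&0\\0&0&0&0&1\end{pmatrix}$, $\mathsf{B}=\begin{pmatrix}1&0&0&0&0\\1&1&0&0&0\\0&0&1&0&0\\0&0&1&1&2\\0&0&0&0&1\end{pmatrix}$, $\mathsf{C}=\begin{pmatrix}1&0&0&0&0\\0&1&0&0&0\\0&0&1&0&0\\0&0&0&1&0\\2&0&0&2&1\end{pmatrix}$, $\mathsf{E}=\begin{pmatrix}0&0&0&1&0\\0&0&1&0&0\\0&1&0&0&0\\1&0&0&0&0\\0&0&0&0&1\end{pmatrix}$, and $\mathsf{W}(m_1,\dots,m_{2d})=\prod_{i=1}^d\mathsf{A}^{m_{2i-1}}\mathsf{B}^{m_{2i}}$.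 $\operatorname{tr}^*(M)=M_{1,2}+M_{2,1}$ is the anti-trace. *)

theory Defs
  imports "Jordan_Normal_Form.Char_Poly"
begin

definition A1 :: "real mat" where "A1 = mat_of_rows_list 2 [[1,1],[0,1]]"
definition B1 :: "real mat" where "B1 = mat_of_rows_list 2 [[1,0],[1,1]]"

definition AA :: "real mat" where
  "AA = mat_of_rows_list 5 [[1,1,0,0,2],[0,1,0,0,0],[0,0,1,1,0],[0,0,0,1,0],[0,0,0,0,1]]"
definition BB :: "real mat" where
  "BB = mat_of_rows_list 5 [[1,0,0,0,0],[1,1,0,0,0],[0,0,1,0,0],[0,0,1,1,2],[0,0,0,0,1]]"
definition CC :: "real mat" where
  "CC = mat_of_rows_list 5 [[1,0,0,0,0],[0,1,0,0,0],[0,0,1,0,0],[0,0,0,1,0],[2,0,0,2,1]]"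
definition EE :: "real mat" where
  "EE = mat_of_rows_list 5 [[0,0,0,1,0],[0,0,1,0,0],[0,1,0,0,0],[1,0,0,0,0],[0,0,0,0,1]]"

fun word :: "nat \<Rightarrow> real mat \<Rightarrow> real mat \<Rightarrow> (nat \<Rightarrow> int) \<Rightarrow> nat \<Rightarrow> real mat" where
  "word n X Y m 0 = 1\<^sub>m n"
| "word n X Y m (Suc k) =
     word n X Y m k * (X ^\<^sub>m nat (m (2*k+1))) * (Y ^\<^sub>m nat (m (2*k+2)))"

definition W1 :: "(nat \<Rightarrow> int) \<Rightarrow> nat \<Rightarrow> real mat" where
  "W1 m d = word 2 A1 B1 m d"

definition WW :: "(nat \<Rightarrow> int) \<Rightarrow> nat \<Rightarrow> real mat" where
  "WW m d = word 5 AA BB m d"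

definition tr2 :: "real mat \<Rightarrow> real" where
  "tr2 M = M $$ (0,0) + M $$ (1,1)"

definition antitr :: "real mat \<Rightarrow> real" where
  "antitr M = M $$ (0,1) + M $$ (1,0)"

end

theory Submission
  imports Defs
begin

definition mat2 :: "real \<Rightarrow> real \<Rightarrow> real \<Rightarrow> real \<Rightarrow> real mat" where
  "mat2 a b c e = mat_of_rows_list 2 [[a,b],[c,e]]"
definition F5 :: "real \<Rightarrow> real \<Rightarrow> real \<Rightarrow> real \<Rightarrow> real mat" where
  "F5 a b c e = mat_of_rows_list 5 [[a,b,0,0,2*b],[c,e,0,0,2*e-2],[0,0,a,b,2*a-2],[0,0,c,e,2*c],[0,0,0,0,1]]"

lemma mat2_mult: "mat2 a b c e * mat2 a' b' c' e' = mat2 (a*a'+b*c') (a*b'+b*e') (c*a'+e*c') (c*b'+e*e')"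
  unfolding mat2_def
  by (rule eq_matI) (auto simp: mat_of_rows_list_def scalar_prod_def numeral_eq_Suc lessThan_Suc atLeast0LessThan[symmetric] less_Suc_eq)

lemma F5_mult: "F5 a b c e * F5 a' b' c' e' = F5 (a*a'+b*c') (a*b'+b*e') (c*a'+e*c') (c*b'+e*e')"
  unfolding F5_def
  by (rule eq_matI) (auto simp: mat_of_rows_list_def scalar_prod_def numeral_eq_Suc lessThan_Suc atLeast0LessThan[symmetric] less_Suc_eq algebra_simps)


lemma det_mat_Suc: "det (mat (Suc n) (Suc n) f) = (\<Sum>j<Suc n. f (0,j) * (-1)^j * det (mat n n (\<lambda>(i,k). f (Suc i, if k < j then k else Suc k))))"
proof -
  have "det (mat (Suc n) (Suc n) f) = (\<Sum>j<Suc n. mat (Suc n) (Suc n) f $$ (0,j) * cofactor (mat (Suc n) (Suc n) f) 0 j)"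
    by (rule laplace_expansion_row) auto
  also have "\<dots> = (\<Sum>j<Suc n. f (0,j) * (-1)^j * det (mat n n (\<lambda>(i,k). f (Suc i, if k < j then k else Suc k))))"
    apply (rule sum.cong, simp)
    apply (simp add: cofactor_def mat_delete_def)
    apply (subgoal_tac "mat n n (\<lambda>(i', j'). mat (Suc n) (Suc n) f $$ (Suc i', if j' < x then j' else Suc j')) = mat n n (\<lambda>(i,k). f (Suc i, if k < x then k else Suc k))")
    apply simp
    apply (rule eq_matI) apply auto done
  finally show ?thesis .
qed

lemma det1: "det (mat 1 1 f) = f(0,0)"
proof -
  have "det (mat 1 1 f) = det (mat (Suc 0) (Suc 0) f)" by (simp add: eval_nat_numeral)
  also have "\<dots> = f(0,0)" by (subst det_mat_Suc) (simp add: det_dim_zero)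
  finally show ?thesis .
qed

lemma det1': "det (mat (Suc 0) (Suc 0) f) = f(0,0)"
  using det1 by simp

lemma det2: "det (mat 2 2 f) = f(0,0) * (f(1,1)) - f(0,1) * (f(1,0))"
proof -
  have "det (mat 2 2 f) = det (mat (Suc 1) (Suc 1) f)" by (simp add: eval_nat_numeral)
  also have "\<dots> = (\<Sum>j<Suc 1. f (0,j) * (-1)^j * det (mat 1 1 (\<lambda>(i,k). f (Suc i, if k < j then k else Suc k))))" by (rule det_mat_Suc)
  also have "\<dots> = f(0,0) * (f(1,1)) - f(0,1) * (f(1,0))"
    apply (simp add: lessThan_Suc det1 det1' lessThan_nat_numeral)
    apply (simp add: eval_nat_numeral add_ac)?
    done
  finally show ?thesis .
qed

lemma det3: "det (mat 3 3 f) = f(0,0) * (f(1,1) * (f(2,2)) - f(1,2) * (f(2,1))) - f(0,1) * (f(1,0) * (f(2,2)) - f(1,2) * (f(2,0))) + f(0,2) * (f(1,0) * (f(2,1)) - f(1,1) * (f(2,0)))"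
proof -
  have "det (mat 3 3 f) = det (mat (Suc 2) (Suc 2) f)" by (simp add: eval_nat_numeral)
  also have "\<dots> = (\<Sum>j<Suc 2. f (0,j) * (-1)^j * det (mat 2 2 (\<lambda>(i,k). f (Suc i, if k < j then k else Suc k))))" by (rule det_mat_Suc)
  also have "\<dots> = f(0,0) * (f(1,1) * (f(2,2)) - f(1,2) * (f(2,1))) - f(0,1) * (f(1,0) * (f(2,2)) - f(1,2) * (f(2,0))) + f(0,2) * (f(1,0) * (f(2,1)) - f(1,1) * (f(2,0)))"
    apply (simp add: lessThan_Suc det2 lessThan_nat_numeral)
    apply (simp add: eval_nat_numeral add_ac)?
    done
  finally show ?thesis .
qed

lemma det4: "det (mat 4 4 f) = f(0,0) * (f(1,1) * (f(2,2) * (f(3,3)) - f(2,3) * (f(3,2))) - f(1,2) * (f(2,1) * (f(3,3)) - f(2,3) * (f(3,1))) + f(1,3) * (f(2,1) * (f(3,2)) - f(2,2) * (f(3,1)))) - f(0,1) * (f(1,0) * (f(2,2) * (f(3,3)) - f(2,3) * (f(3,2))) - f(1,2) * (f(2,0) * (f(3,3)) - f(2,3) * (f(3,0))) + f(1,3) * (f(2,0) * (f(3,2)) - f(2,2) * (f(3,0)))) + f(0,2) * (f(1,0) * (f(2,1) * (f(3,3)) - f(2,3) * (f(3,1))) - f(1,1) * (f(2,0) * (f(3,3)) - f(2,3) * (f(3,0))) + f(1,3) * (f(2,0) * (f(3,1)) - f(2,1) * (f(3,0)))) - f(0,3) * (f(1,0) * (f(2,1) * (f(3,2)) - f(2,2)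 * (f(3,1))) - f(1,1) * (f(2,0) * (f(3,2)) - f(2,2) * (f(3,0))) + f(1,2) * (f(2,0) * (f(3,1)) - f(2,1) * (f(3,0))))"
proof -
  have "det (mat 4 4 f) = det (mat (Suc 3) (Suc 3) f)" by (simp add: eval_nat_numeral)
  also have "\<dots> = (\<Sum>j<Suc 3. f (0,j) * (-1)^j * det (mat 3 3 (\<lambda>(i,k). f (Suc i, if k < j then k else Suc k))))" by (rule det_mat_Suc)
  also have "\<dots> = f(0,0) * (f(1,1) * (f(2,2) * (f(3,3)) - f(2,3) * (f(3,2))) - f(1,2) * (f(2,1) * (f(3,3)) - f(2,3) * (f(3,1))) + f(1,3) * (f(2,1) * (f(3,2)) - f(2,2) * (f(3,1)))) - f(0,1) * (f(1,0) * (f(2,2) * (f(3,3)) - f(2,3) * (f(3,2))) - f(1,2) * (f(2,0) * (f(3,3)) - f(2,3) * (f(3,0))) + f(1,3) * (f(2,0) * (f(3,2)) - f(2,2) * (f(3,0)))) + f(0,2) * (f(1,0) * (f(2,1) * (f(3,3)) - f(2,3) * (f(3,1))) - f(1,1) * (f(2,0) * (f(3,3)) - f(2,3) * (f(3,0))) + f(1,3) * (f(2,0) * (f(3,1)) - f(2,1) * (f(3,0)))) - f(0,3) * (f(1,0) * (f(2,1) * (f(3,2)) - f(2,2) * (f(3,1))) - f(1,1) * (f(2,0) * (f(3,2)) - f(2,2) * (f(3,0))) + f(1,2) * (f(2,0) * (f(3,1)) - f(2,1) * (f(3,0))))"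
    apply (simp add: lessThan_Suc det3 lessThan_nat_numeral)
    apply (simp add: eval_nat_numeral add_ac)?
    done
  finally show ?thesis .
qed

lemma det5: "det (mat 5 5 f) = f(0,0) * (f(1,1) * (f(2,2) * (f(3,3) * (f(4,4)) - f(3,4) * (f(4,3))) - f(2,3) * (f(3,2) * (f(4,4)) - f(3,4) * (f(4,2))) + f(2,4) * (f(3,2) * (f(4,3)) - f(3,3) * (f(4,2)))) - f(1,2) * (f(2,1) * (f(3,3) * (f(4,4)) - f(3,4) * (f(4,3))) - f(2,3) * (f(3,1) * (f(4,4)) - f(3,4) * (f(4,1))) + f(2,4) * (f(3,1) * (f(4,3)) - f(3,3) * (f(4,1)))) + f(1,3) * (f(2,1) * (f(3,2) * (f(4,4)) - f(3,4) * (f(4,2))) - f(2,2) * (f(3,1) * (f(4,4)) - f(3,4) * (f(4,1))) + f(2,4) * (f(3,1) * (f(4,2)) - f(3,2) * (f(4,1)))) - f(1,4) * (f(2,1) * (f(3,2) * (f(4,3)) - f(3,3) * (f(4,2))) - f(2,2) * (f(3,1) * (f(4,3)) - f(3,3) * (f(4,1))) + f(2,3) * (f(3,1) * (f(4,2)) - f(3,2) * (f(4,1))))) - f(0,1) * (f(1,0) * (f(2,2) * (f(3,3) * (f(4,4)) - f(3,4) * (f(4,3))) - f(2,3) * (f(3,2) * (f(4,4)) - f(3,4) * (f(4,2))) + f(2,4) * (f(3,2) * (f(4,3)) - f(3,3) * (f(4,2)))) - f(1,2) * (f(2,0) * (f(3,3) * (f(4,4)) - f(3,4) * (f(4,3)))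 - f(2,3) * (f(3,0) * (f(4,4)) - f(3,4) * (f(4,0))) + f(2,4) * (f(3,0) * (f(4,3)) - f(3,3) * (f(4,0)))) + f(1,3) * (f(2,0) * (f(3,2) * (f(4,4)) - f(3,4) * (f(4,2))) - f(2,2) * (f(3,0) * (f(4,4)) - f(3,4) * (f(4,0))) + f(2,4) * (f(3,0) * (f(4,2)) - f(3,2) * (f(4,0)))) - f(1,4) * (f(2,0) * (f(3,2) * (f(4,3)) - f(3,3) * (f(4,2))) - f(2,2) * (f(3,0) * (f(4,3)) - f(3,3) * (f(4,0))) + f(2,3) * (f(3,0) * (f(4,2)) - f(3,2) * (f(4,0))))) + f(0,2) * (f(1,0) * (f(2,1) * (f(3,3) * (f(4,4)) - f(3,4) * (f(4,3))) - f(2,3) * (f(3,1) * (f(4,4)) - f(3,4) * (f(4,1))) + f(2,4) * (f(3,1) * (f(4,3)) - f(3,3) * (f(4,1)))) - f(1,1) * (f(2,0) * (f(3,3) * (f(4,4)) - f(3,4) * (f(4,3))) - f(2,3) * (f(3,0) * (f(4,4)) - f(3,4) * (f(4,0))) + f(2,4) * (f(3,0) * (f(4,3)) - f(3,3) * (f(4,0)))) + f(1,3) * (f(2,0) * (f(3,1) * (f(4,4)) - f(3,4) * (f(4,1))) - f(2,1) * (f(3,0) * (f(4,4)) - f(3,4) * (f(4,0))) + f(2,4) * (f(3,0) * (f(4,1)) - f(3,1) * (f(4,0)))) - f(1,4) * (f(2,0) * (f(3,1) * (f(4,3)) - f(3,3) * (f(4,1))) - f(2,1) * (f(3,0) * (f(4,3))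 - f(3,3) * (f(4,0))) + f(2,3) * (f(3,0) * (f(4,1)) - f(3,1) * (f(4,0))))) - f(0,3) * (f(1,0) * (f(2,1) * (f(3,2) * (f(4,4)) - f(3,4) * (f(4,2))) - f(2,2) * (f(3,1) * (f(4,4)) - f(3,4) * (f(4,1))) + f(2,4) * (f(3,1) * (f(4,2)) - f(3,2) * (f(4,1)))) - f(1,1) * (f(2,0) * (f(3,2) * (f(4,4)) - f(3,4) * (f(4,2))) - f(2,2) * (f(3,0) * (f(4,4)) - f(3,4) * (f(4,0))) + f(2,4) * (f(3,0) * (f(4,2)) - f(3,2) * (f(4,0)))) + f(1,2) * (f(2,0) * (f(3,1) * (f(4,4)) - f(3,4) * (f(4,1))) - f(2,1) * (f(3,0) * (f(4,4)) - f(3,4) * (f(4,0))) + f(2,4) * (f(3,0) * (f(4,1)) - f(3,1) * (f(4,0)))) - f(1,4) * (f(2,0) * (f(3,1) * (f(4,2)) - f(3,2) * (f(4,1))) - f(2,1) * (f(3,0) * (f(4,2)) - f(3,2) * (f(4,0))) + f(2,2) * (f(3,0) * (f(4,1)) - f(3,1) * (f(4,0))))) + f(0,4) * (f(1,0) * (f(2,1) * (f(3,2) * (f(4,3)) - f(3,3) * (f(4,2))) - f(2,2) * (f(3,1) * (f(4,3)) - f(3,3) * (f(4,1))) + f(2,3) * (f(3,1) * (f(4,2)) - f(3,2) * (f(4,1)))) - f(1,1) * (f(2,0) * (f(3,2) * (f(4,3)) - f(3,3) * (f(4,2))) - f(2,2) * (f(3,0) * (f(4,3)) - f(3,3) * (f(4,0)))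 + f(2,3) * (f(3,0) * (f(4,2)) - f(3,2) * (f(4,0)))) + f(1,2) * (f(2,0) * (f(3,1) * (f(4,3)) - f(3,3) * (f(4,1))) - f(2,1) * (f(3,0) * (f(4,3)) - f(3,3) * (f(4,0))) + f(2,3) * (f(3,0) * (f(4,1)) - f(3,1) * (f(4,0)))) - f(1,3) * (f(2,0) * (f(3,1) * (f(4,2)) - f(3,2) * (f(4,1))) - f(2,1) * (f(3,0) * (f(4,2)) - f(3,2) * (f(4,0))) + f(2,2) * (f(3,0) * (f(4,1)) - f(3,1) * (f(4,0)))))"
proof -
  have "det (mat 5 5 f) = det (mat (Suc 4) (Suc 4) f)" by (simp add: eval_nat_numeral)
  also have "\<dots> = (\<Sum>j<Suc 4. f (0,j) * (-1)^j * det (mat 4 4 (\<lambda>(i,k). f (Suc i, if k < j then k else Suc k))))" by (rule det_mat_Suc)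
  also have "\<dots> = f(0,0) * (f(1,1) * (f(2,2) * (f(3,3) * (f(4,4)) - f(3,4) * (f(4,3))) - f(2,3) * (f(3,2) * (f(4,4)) - f(3,4) * (f(4,2))) + f(2,4) * (f(3,2) * (f(4,3)) - f(3,3) * (f(4,2)))) - f(1,2) * (f(2,1) * (f(3,3) * (f(4,4)) - f(3,4) * (f(4,3))) - f(2,3) * (f(3,1) * (f(4,4)) - f(3,4) * (f(4,1))) + f(2,4) * (f(3,1) * (f(4,3)) - f(3,3) * (f(4,1)))) + f(1,3) * (f(2,1) * (f(3,2) * (f(4,4)) - f(3,4) * (f(4,2))) - f(2,2) * (f(3,1) * (f(4,4)) - f(3,4) * (f(4,1))) + f(2,4) * (f(3,1) * (f(4,2)) - f(3,2) * (f(4,1)))) - f(1,4) * (f(2,1) * (f(3,2) * (f(4,3)) - f(3,3) * (f(4,2))) - f(2,2) * (f(3,1) * (f(4,3)) - f(3,3) * (f(4,1))) + f(2,3) * (f(3,1) * (f(4,2)) - f(3,2) * (f(4,1))))) - f(0,1) * (f(1,0) * (f(2,2) * (f(3,3) * (f(4,4)) - f(3,4) * (f(4,3))) - f(2,3) * (f(3,2) * (f(4,4)) - f(3,4) * (f(4,2))) + f(2,4) * (f(3,2) * (f(4,3)) - f(3,3) * (f(4,2)))) - f(1,2) * (f(2,0) * (f(3,3) * (f(4,4)) - f(3,4) * (f(4,3))) - f(2,3) * (f(3,0) * (f(4,4)) - f(3,4) * (f(4,0))) + f(2,4) * (f(3,0) * (f(4,3)) - f(3,3) * (f(4,0)))) +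 f(1,3) * (f(2,0) * (f(3,2) * (f(4,4)) - f(3,4) * (f(4,2))) - f(2,2) * (f(3,0) * (f(4,4)) - f(3,4) * (f(4,0))) + f(2,4) * (f(3,0) * (f(4,2)) - f(3,2) * (f(4,0)))) - f(1,4) * (f(2,0) * (f(3,2) * (f(4,3)) - f(3,3) * (f(4,2))) - f(2,2) * (f(3,0) * (f(4,3)) - f(3,3) * (f(4,0))) + f(2,3) * (f(3,0) * (f(4,2)) - f(3,2) * (f(4,0))))) + f(0,2) * (f(1,0) * (f(2,1) * (f(3,3) * (f(4,4)) - f(3,4) * (f(4,3))) - f(2,3) * (f(3,1) * (f(4,4)) - f(3,4) * (f(4,1))) + f(2,4) * (f(3,1) * (f(4,3)) - f(3,3) * (f(4,1)))) - f(1,1) * (f(2,0) * (f(3,3) * (f(4,4)) - f(3,4) * (f(4,3))) - f(2,3) * (f(3,0) * (f(4,4)) - f(3,4) * (f(4,0))) + f(2,4) * (f(3,0) * (f(4,3)) - f(3,3) * (f(4,0)))) + f(1,3) * (f(2,0) * (f(3,1) * (f(4,4)) - f(3,4) * (f(4,1))) - f(2,1) * (f(3,0) * (f(4,4)) - f(3,4) * (f(4,0))) + f(2,4) * (f(3,0) * (f(4,1)) - f(3,1) * (f(4,0)))) - f(1,4) * (f(2,0) * (f(3,1) * (f(4,3)) - f(3,3) * (f(4,1))) - f(2,1) * (f(3,0) * (f(4,3)) - f(3,3) * (f(4,0))) + f(2,3) * (f(3,0) * (f(4,1)) - f(3,1) * (f(4,0))))) - f(0,3) * (f(1,0) * (f(2,1)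 * (f(3,2) * (f(4,4)) - f(3,4) * (f(4,2))) - f(2,2) * (f(3,1) * (f(4,4)) - f(3,4) * (f(4,1))) + f(2,4) * (f(3,1) * (f(4,2)) - f(3,2) * (f(4,1)))) - f(1,1) * (f(2,0) * (f(3,2) * (f(4,4)) - f(3,4) * (f(4,2))) - f(2,2) * (f(3,0) * (f(4,4)) - f(3,4) * (f(4,0))) + f(2,4) * (f(3,0) * (f(4,2)) - f(3,2) * (f(4,0)))) + f(1,2) * (f(2,0) * (f(3,1) * (f(4,4)) - f(3,4) * (f(4,1))) - f(2,1) * (f(3,0) * (f(4,4)) - f(3,4) * (f(4,0))) + f(2,4) * (f(3,0) * (f(4,1)) - f(3,1) * (f(4,0)))) - f(1,4) * (f(2,0) * (f(3,1) * (f(4,2)) - f(3,2) * (f(4,1))) - f(2,1) * (f(3,0) * (f(4,2)) - f(3,2) * (f(4,0))) + f(2,2) * (f(3,0) * (f(4,1)) - f(3,1) * (f(4,0))))) + f(0,4) * (f(1,0) * (f(2,1) * (f(3,2) * (f(4,3)) - f(3,3) * (f(4,2))) - f(2,2) * (f(3,1) * (f(4,3)) - f(3,3) * (f(4,1))) + f(2,3) * (f(3,1) * (f(4,2)) - f(3,2) * (f(4,1)))) - f(1,1) * (f(2,0) * (f(3,2) * (f(4,3)) - f(3,3) * (f(4,2))) - f(2,2) * (f(3,0) * (f(4,3)) - f(3,3) * (f(4,0))) + f(2,3) * (f(3,0) * (f(4,2)) - f(3,2) * (f(4,0)))) + f(1,2) * (f(2,0) * (f(3,1) * (f(4,3)) -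 f(3,3) * (f(4,1))) - f(2,1) * (f(3,0) * (f(4,3)) - f(3,3) * (f(4,0))) + f(2,3) * (f(3,0) * (f(4,1)) - f(3,1) * (f(4,0)))) - f(1,3) * (f(2,0) * (f(3,1) * (f(4,2)) - f(3,2) * (f(4,1))) - f(2,1) * (f(3,0) * (f(4,2)) - f(3,2) * (f(4,0))) + f(2,2) * (f(3,0) * (f(4,1)) - f(3,1) * (f(4,0)))))"
    apply (simp add: lessThan_Suc det4 lessThan_nat_numeral)
    apply (simp add: eval_nat_numeral add_ac)?
    done
  finally show ?thesis .
qed

lemma detC: fixes a b c e \<mu> :: complex
  assumes "a*e - b*c = 1"
  shows "det (mat 5 5 (\<lambda>(i,j). 
   [[-\<mu>,0,b,a,2*b],[0,-\<mu>,e,c,2*e-2],[b,a,-\<mu>,0,2*a-2],[e,c,0,-\<mu>,2*c],[2*e,2*c,2*b,2*a,4*(b+c)+1-\<mu>]] ! i ! j))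
  = - (\<mu>^5 - (4*(b+c)+1)*\<mu>^4 - ((b+c)^2+4*(a+e)*(b+c)-4*(b+c)+2)*\<mu>^3 + ((b+c)^2+4*(a+e)*(b+c)-4*(b+c)+2)*\<mu>^2 + (4*(b+c)+1)*\<mu> - 1)"
proof -
  have "det (mat 5 5 (\<lambda>(i,j). 
   [[-\<mu>,0,b,a,2*b],[0,-\<mu>,e,c,2*e-2],[b,a,-\<mu>,0,2*a-2],[e,c,0,-\<mu>,2*c],[2*e,2*c,2*b,2*a,4*(b+c)+1-\<mu>]] ! i ! j))
  = - (\<mu>^5 - (4*(b+c)+1)*\<mu>^4 - ((b+c)^2+4*(a+e)*(b+c)-4*(b+c)+2)*\<mu>^3 + ((b+c)^2+4*(a+e)*(b+c)-4*(b+c)+2)*\<mu>^2 + (4*(b+c)+1)*\<mu> - 1) + (a*e-b*c-1)*((-2)*\<mu>^2 + 2*\<mu>^3 - 4*c*\<mu> + 4*c*\<mu>^2 - 4*b*\<mu> - b*c + b*c*\<mu> + a*e - a*e*\<mu> + 4*b*\<mu>^2 + 1 - \<mu>)"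
    unfolding det5 by (simp add: eval_nat_numeral) (simp add: algebra_simps)
  then show ?thesis using assms by simp
qed

lemma quad: fixes y u \<mu> :: complex assumes "u^2 = y^2 - 4"
  shows "(\<mu> - (y+u)/2) * (\<mu> - (y-u)/2) = \<mu>^2 - y*\<mu> + 1"
proof -
  have "(\<mu> - (y+u)/2) * (\<mu> - (y-u)/2) = \<mu>^2 - y*\<mu> + (y^2-u^2)/4"
    by (simp add: field_simps power2_eq_square)
  then show ?thesis using assms by simp
qed

lemma factor: fixes S T R U1 U2 \<mu> :: complex
  assumes "R^2 = 5*S^2+4*T*S+4" "U1^2 = (2*S+R)^2-4" "U2^2 = (2*S-R)^2-4"
  shows "\<mu>^5 - (4*S+1)*\<mu>^4 - (S^2+4*T*S-4*S+2)*\<mu>^3 + (S^2+4*T*S-4*S+2)*\<mu>^2 + (4*S+1)*\<mu> - 1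
    = (\<mu>-1)*((\<mu>-(2*S+R+U1)/2)*(\<mu>-(2*S+R-U1)/2))*((\<mu>-(2*S-R+U2)/2)*(\<mu>-(2*S-R-U2)/2))"
proof -
  have 1: "(\<mu>-(2*S+R+U1)/2)*(\<mu>-(2*S+R-U1)/2) = \<mu>^2 - (2*S+R)*\<mu> + 1"
    using quad[OF assms(2)] by (simp add: add.assoc)
  have 2: "(\<mu>-(2*S-R+U2)/2)*(\<mu>-(2*S-R-U2)/2) = \<mu>^2 - (2*S-R)*\<mu> + 1"
    using quad[OF assms(3)] by simp
  have 3: "(\<mu>-1)*(\<mu>^2 - (2*S+R)*\<mu> + 1)*(\<mu>^2 - (2*S-R)*\<mu> + 1) = 
     \<mu>^5 - (4*S+1)*\<mu>^4 - (S^2+4*T*S-4*S+2)*\<mu>^3 + (S^2+4*T*S-4*S+2)*\<mu>^2 + (4*S+1)*\<mu> - 1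
     + (R^2 - (5*S^2+4*T*S+4)) * (\<mu>^2 - \<mu>^3)"
    by (simp add: eval_nat_numeral) (simp add: algebra_simps)
  show ?thesis unfolding 1 2 using 3 assms(1) by simp
qed

definition M5 :: "real \<Rightarrow> real \<Rightarrow> real \<Rightarrow> real \<Rightarrow> real mat" where
 "M5 a b c e = mat_of_rows_list 5 [[0,0,b,a,2*b],[0,0,e,c,2*e-2],[b,a,0,0,2*a-2],[e,c,0,0,2*c],[2*e,2*c,2*b,2*a,4*(b+c)+1]]"

lemma dim_M5: "dim_row (M5 a b c e) = 5" "dim_col (M5 a b c e) = 5"
  unfolding M5_def by (simp_all add: mat_of_rows_list_def)

lemma charM: "char_matrix (map_mat complex_of_real (M5 a b c e)) \<mu> = mat 5 5 (\<lambda>(i,j). 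
   [[-\<mu>,0,of_real b,of_real a,2*of_real b],[0,-\<mu>,of_real e,of_real c,2*of_real e-2],[of_real b,of_real a,-\<mu>,0,2*of_real a-2],[of_real e,of_real c,0,-\<mu>,2*of_real c],[2*of_real e,2*of_real c,2*of_real b,2*of_real a,4*(of_real b+of_real c)+1-\<mu>]] ! i ! j)"
  unfolding char_matrix_def M5_def
  by (rule eq_matI) (auto simp: mat_of_rows_list_def numeral_eq_Suc less_Suc_eq)



lemma tac_simps: "True" by simp

lemma A1_eq: "A1 = mat2 1 1 0 1"
  unfolding A1_def mat2_def by simp
lemma B1_eq: "B1 = mat2 1 0 1 1"
  unfolding B1_def mat2_def by simp
lemma AA_eq: "AA = F5 1 1 0 1"
  unfolding AA_def F5_def by simp
lemma BB_eq: "BB = F5 1 0 1 1"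
  unfolding BB_def F5_def by simp
lemma one2: "1\<^sub>m 2 = mat2 1 0 0 1"
  unfolding mat2_def
  by (rule eq_matI) (auto simp: mat_of_rows_list_def numeral_eq_Suc less_Suc_eq)
lemma one5: "1\<^sub>m 5 = F5 1 0 0 1"
  unfolding F5_def
  by (rule eq_matI) (auto simp: mat_of_rows_list_def numeral_eq_Suc less_Suc_eq)

lemma dim_mat2[simp]: "dim_row (mat2 a b c e) = 2" "dim_col (mat2 a b c e) = 2"
  unfolding mat2_def by (simp_all add: mat_of_rows_list_def)
lemma dim_F5[simp]: "dim_row (F5 a b c e) = 5" "dim_col (F5 a b c e) = 5"
  unfolding F5_def by (simp_all add: mat_of_rows_list_def)

lemma A1_pow: "A1 ^\<^sub>m n = mat2 1 (real n) 0 1"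
  by (induction n) (auto simp: one2 A1_eq mat2_mult add.commute)
lemma B1_pow: "B1 ^\<^sub>m n = mat2 1 0 (real n) 1"
  by (induction n) (auto simp: one2 B1_eq mat2_mult add.commute)
lemma AA_pow: "AA ^\<^sub>m n = F5 1 (real n) 0 1"
  by (induction n) (auto simp: one5 AA_eq F5_mult add.commute)
lemma BB_pow: "BB ^\<^sub>m n = F5 1 0 (real n) 1"
  by (induction n) (auto simp: one5 BB_eq F5_mult add.commute)

lemma struct:
  assumes m1: "m 1 > 0"
  shows "\<exists>a b c e. W1 m k = mat2 a b c e \<and> WW m k = F5 a b c e \<and> a*e-b*c = 1 \<and>
     a \<ge> 1 \<and> e \<ge> 1 \<and> b \<ge> 0 \<and> c \<ge> 0 \<and> (k \<ge> 1 \<longrightarrow> b \<ge> 1)"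
proof (induction k)
  case 0
  show ?case by (rule exI[of _ 1], rule exI[of _ 0], rule exI[of _ 0], rule exI[of _ 1])
      (simp add: W1_def WW_def one2 one5)
next
  case (Suc k)
  then obtain a b c e where W: "W1 m k = mat2 a b c e" and WW: "WW m k = F5 a b c e"
    and h: "a*e-b*c = 1" "a \<ge> 1" "e \<ge> 1" "b \<ge> 0" "c \<ge> 0" "k \<ge> 1 \<longrightarrow> b \<ge> 1" by blast
  define p where "p = real (nat (m (2*k+1)))"
  define q where "q = real (nat (m (2*k+2)))"
  have p0: "p \<ge> 0" and q0: "q \<ge> 0" unfolding p_def q_def by auto
  have W': "W1 m (Suc k) = mat2 (a + (a*p+b)*q) (a*p+b) (c+(c*p+e)*q) (c*p+e)"
    using W by (simp add: W1_def A1_pow B1_pow mat2_mult p_def q_def)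
  have WW': "WW m (Suc k) = F5 (a + (a*p+b)*q) (a*p+b) (c+(c*p+e)*q) (c*p+e)"
    using WW by (simp add: WW_def AA_pow BB_pow F5_mult p_def q_def)
  have d: "(a + (a*p+b)*q)*(c*p+e) - (a*p+b)*(c+(c*p+e)*q) = a*e-b*c"
    by (simp add: algebra_simps)
  have ap: "a*p \<ge> 0" using h p0 by simp
  have "(a*p+b)*q \<ge> 0" using ap h q0 by simp
  moreover have "(c*p+e)*q \<ge> 0" "c*p \<ge> 0" using h p0 q0 by simp_all
  moreover have "a*p+b \<ge> 1"
  proof (cases "k = 0")
    case True
    then have "p \<ge> 1" using m1 unfolding p_def by simp
    then have "a*p \<ge> 1" using h by (metis mult_mono' mult_1 zero_le_one order_trans)
    then show ?thesis using h by simp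
  next
    case False then show ?thesis using h ap by simp
  qed
  ultimately have f1: "1 \<le> a + (a*p+b)*q" "1 \<le> c*p+e" "0 \<le> c+(c*p+e)*q" "0 \<le> a*p+b" "1 \<le> a*p+b"
    using h by linarith+
  have f2: "(a + (a*p+b)*q)*(c*p+e) - (a*p+b)*(c+(c*p+e)*q) = 1" using d h(1) by simp
  show ?case
    apply (rule exI[of _ "a + (a*p+b)*q"], rule exI[of _ "a*p+b"], rule exI[of _ "c+(c*p+e)*q"], rule exI[of _ "c*p+e"])
    apply (intro conjI)
    apply (rule W')
    apply (rule WW')
    apply (rule f2)
    apply (rule f1(1))
    apply (rule f1(2))
    apply (rule f1(4))
    apply (rule f1(3))
    using f1(5) by blast
qed

lemma CF: "CC * F5 a b c e = mat_of_rows_list 5 [[a,b,0,0,2*b],[c,e,0,0,2*e-2],[0,0,a,b,2*a-2],[0,0,c,e,2*c],[2*a,2*b,2*c,2*e,4*b+4*c+1]]"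
  unfolding F5_def CC_def
  by (rule eq_matI) (auto simp: mat_of_rows_list_def scalar_prod_def numeral_eq_Suc lessThan_Suc atLeast0LessThan[symmetric] less_Suc_eq)
lemma M5_eq: "CC * F5 a b c e * EE = M5 a b c e"
  unfolding CF M5_def EE_def
  by (rule eq_matI) (auto simp: mat_of_rows_list_def scalar_prod_def numeral_eq_Suc lessThan_Suc atLeast0LessThan[symmetric] less_Suc_eq)

lemma tr_mat2: "tr2 (mat2 a b c e) = a + e" "antitr (mat2 a b c e) = b + c"
  unfolding tr2_def antitr_def mat2_def by (simp_all add: mat_of_rows_list_def)

lemma eig_iff:
  fixes a b c e :: real
  assumes "a*e - b*c = 1"
  shows "eigenvalue (map_mat complex_of_real (M5 a b c e)) \<mu> \<longleftrightarrow>
   (\<mu>^5 - (4*(of_real b+of_real c)+1)*\<mu>^4 - ((of_real b+of_real c)^2+4*(of_real a+of_real e)*(of_real b+of_real c)-4*(of_real b+of_real c)+2)*\<mu>^3 + ((of_real b+of_real c)^2+4*(of_real a+of_real e)*(of_real b+of_real c)-4*(of_real b+of_real c)+2)*\<mu>^2 + (4*(of_real b+of_real c)+1)*\<mu> - 1) = 0"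
proof -
  have car: "map_mat complex_of_real (M5 a b c e) \<in> carrier_mat 5 5"
    by (rule carrier_matI) (simp_all add: dim_M5)
  have h: "complex_of_real a * complex_of_real e - complex_of_real b * complex_of_real c = 1"
    by (metis assms of_real_1 of_real_diff of_real_mult)
  show ?thesis
    apply (subst eigenvalue_det[OF car])
    apply (subst charM)
    apply (subst detC[OF h])
    apply (rule neg_equal_0_iff_equal)
    done
qed

theorem mainTheorem14:
  fixes d :: nat and m :: "nat \<Rightarrow> int"
  assumes "d \<ge> 1"
    and "\<And>i. 1 \<le> i \<Longrightarrow> i < 2*d \<Longrightarrow> m i > 0"
    and "m (2*d) \<ge> 0"
  shows "let t = tr2 (W1 m d); s = antitr (W1 m d);
             M = CC * WW m d * EE;
             \<Lambda> = s + sqrt (5*s^2 + 4*t*s + 4)/2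
                   + sqrt (9*s^2 + 4*t*s + 4*s*sqrt (5*s^2 + 4*t*s + 4))/2
         in \<exists>ls :: real list. length ls = 5 \<and> distinct ls \<and> distinct (map abs ls) \<and>
              {\<mu>. eigenvalue (map_mat complex_of_real M) \<mu>} = complex_of_real ` set ls \<and>
              \<Lambda> \<in> set ls \<and> (\<forall>\<mu>\<in>set ls. \<bar>\<mu>\<bar> \<le> \<bar>\<Lambda>\<bar>)"
proof -
  have m1: "m 1 > 0" using assms(2)[of 1] assms(1) by auto
  obtain a b c e where W: "W1 m d = mat2 a b c e" and WWe: "WW m d = F5 a b c e"
    and h: "a*e-b*c = 1" "a \<ge> 1" "e \<ge> 1" "b \<ge> 0" "c \<ge> 0" "b \<ge> 1"
    using struct[of m d, OF m1] assms(1) by blast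
  define s where "s = b + c"
  define t where "t = a + e"
  have trs: "tr2 (W1 m d) = t" "antitr (W1 m d) = s"
    unfolding W tr_mat2 s_def t_def by simp_all
  have Meq: "CC * WW m d * EE = M5 a b c e" unfolding WWe by (rule M5_eq)
  have s1: "s \<ge> 1" and t2: "t \<ge> 2" using h unfolding s_def t_def by linarith+
  define r where "r = sqrt (5*s^2 + 4*t*s + 4)"
  define u1 where "u1 = sqrt (9*s^2 + 4*t*s + 4*s*r)"
  define u2 where "u2 = sqrt (9*s^2 + 4*t*s - 4*s*r)"
  have ts: "t*s \<ge> 2" using s1 t2 by (metis mult_mono' mult_1 one_le_numeral order_trans zero_le_one mult.commute)
  have D0: "5*s^2 + 4*t*s + 4 \<ge> 0"
  proof -
    have "4*t*s = 4*(t*s)" by simp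
    moreover have "0 \<le> s^2" by simp
    ultimately show ?thesis using ts by linarith
  qed
  have r2: "r^2 = 5*s^2 + 4*t*s + 4" unfolding r_def by (rule real_sqrt_pow2[OF D0])
  have r0: "r \<ge> 0" unfolding r_def by (rule real_sqrt_ge_zero[OF D0])
  have "(2*s+2)^2 < 5*s^2 + 4*t*s + 4"
  proof -
    have "s*(s + 4*t - 8) > 0" using s1 t2 by (intro mult_pos_pos) linarith+
    then show ?thesis by (simp add: power2_eq_square algebra_simps)
  qed
  then have rbig: "r > 2*s+2" unfolding r_def by (rule real_less_rsqrt)
  have sr: "s*r \<ge> 0" using s1 r0 by simp
  have u1arg: "9*s^2 + 4*t*s + 4*s*r \<ge> 0"
  proof -
    have "4*s*r = 4*(s*r)" "4*t*s = 4*(t*s)" by simp_all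
    moreover have "0 \<le> s^2" by simp
    ultimately show ?thesis using sr ts by linarith
  qed
  have u1sq: "u1^2 = (2*s+r)^2 - 4"
  proof -
    from u1arg have "u1^2 = 9*s^2 + 4*t*s + 4*s*r" unfolding u1_def by (rule real_sqrt_pow2)
    also have "\<dots> = (2*s+r)^2 - 4" using r2 by (simp add: power2_eq_square algebra_simps)
    finally show ?thesis .
  qed
  have u2eq: "9*s^2 + 4*t*s - 4*s*r = (2*s-r)^2 - 4" using r2 by (simp add: power2_eq_square algebra_simps)
  have "(2*s-r)^2 > 4"
  proof -
    have "r - 2*s > 2" using rbig by linarith
    then have "(r-2*s)^2 > 2^2" by (intro power_strict_mono) auto
    then show ?thesis by (simp add: power2_eq_square algebra_simps)
  qed
  then have u2sq: "u2^2 = (2*s-r)^2 - 4" unfolding u2_def u2eq by (intro real_sqrt_pow2) simp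
  have u10: "u1 \<ge> 0" unfolding u1_def by (rule real_sqrt_ge_zero[OF u1arg])
  have u20: "u2 \<ge> 0" unfolding u2_def u2eq using \<open>(2*s-r)^2 > 4\<close> by (intro real_sqrt_ge_zero) simp
  have "u2^2 < u1^2" unfolding u1sq u2sq using sr s1 rbig by (simp add: power2_eq_square algebra_simps)
  then have u12: "u2 < u1" using u10 by (simp add: power_less_imp_less_base)
  have "u2^2 < (r-2*s)^2" unfolding u2sq by (simp add: power2_eq_square algebra_simps)
  moreover have "0 \<le> r - 2*s" using rbig s1 by linarith
  ultimately have u2lt: "u2 < r - 2*s" by (rule power_less_imp_less_base)
  have "u1^2 < (2*s+r)^2" unfolding u1sq by simp
  moreover have "0 \<le> 2*s+r" using rbig s1 by linarith
  ultimately have u1lt: "u1 < 2*s+r" by (rule power_less_imp_less_base)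
  define x1 where "x1 = (2*s+r+u1)/2"
  define x2 where "x2 = (2*s+r-u1)/2"
  define x3 where "x3 = (2*s-r-u2)/2"
  define x4 where "x4 = (2*s-r+u2)/2"
  have p12: "x1*x2 = 1"
  proof -
    have "x1*x2 = ((2*s+r)^2 - u1^2)/4" unfolding x1_def x2_def by (simp add: power2_eq_square algebra_simps)
    then show ?thesis using u1sq by simp
  qed
  have p34: "x3*x4 = 1"
  proof -
    have "x3*x4 = ((2*s-r)^2 - u2^2)/4" unfolding x3_def x4_def by (simp add: power2_eq_square algebra_simps)
    then show ?thesis using u2sq by simp
  qed
  have o1: "x1 > -x3" unfolding x1_def x3_def using u12 s1 by (simp add: field_simps; linarith)
  have o2: "-x3 > 1" unfolding x3_def using rbig u20 by (simp add: field_simps; linarith)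
  have o3: "x4 < 0" unfolding x4_def using u2lt by (simp add: field_simps; linarith)
  have o4: "x2 > 0" unfolding x2_def using u1lt by (simp add: field_simps; linarith)
  have x1pos: "x1 > 0" using o1 o2 by linarith
  have o5: "-x4 < 1"
  proof -
    have "(-x3)*(-x4) = 1" using p34 by simp
    moreover have "1*(-x4) < (-x3)*(-x4)" using o2 o3 by (intro mult_strict_right_mono) auto
    ultimately show ?thesis by simp
  qed
  have o6: "x2 < -x4"
  proof -
    have "(-x3)*x2 < x1*x2" using o1 o4 by (intro mult_strict_right_mono) auto
    then have hh: "(-x3)*x2 < (-x3)*(-x4)" using p12 p34 by simp
    have c: "0 < -x3" using o2 by linarith
    show ?thesis using iffD1[OF mult_less_cancel_left_pos[OF c] hh] .
  qed
  have Lam: "s + sqrt (5*s^2 + 4*t*s + 4)/2 + sqrt (9*s^2 + 4*t*s + 4*s*sqrt (5*s^2 + 4*t*s + 4))/2 = x1"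
    unfolding x1_def u1_def r_def by simp
  have absx: "\<bar>x1\<bar> = x1" "\<bar>x2\<bar> = x2" "\<bar>x3\<bar> = -x3" "\<bar>x4\<bar> = -x4"
    using x1pos o4 o2 o3 by auto
  have eig: "{\<mu>. eigenvalue (map_mat complex_of_real (M5 a b c e)) \<mu>} = complex_of_real ` set [x1,x2,x3,x4,1]"
  proof -
    have R: "(complex_of_real r)^2 = 5*(of_real b + of_real c)^2 + 4*(of_real a + of_real e)*(of_real b + of_real c) + 4"
      using arg_cong[OF r2, of complex_of_real] unfolding s_def t_def by simp
    have U1: "(complex_of_real u1)^2 = (2*(of_real b + of_real c) + of_real r)^2 - 4"
      using arg_cong[OF u1sq, of complex_of_real] unfolding s_def by simp
    have U2: "(complex_of_real u2)^2 = (2*(of_real b + of_real c) - of_real r)^2 - 4"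
      using arg_cong[OF u2sq, of complex_of_real] unfolding s_def by simp
    have cx: "complex_of_real x1 = (2*(of_real b + of_real c)+of_real r+of_real u1)/2"
      "complex_of_real x2 = (2*(of_real b + of_real c)+of_real r-of_real u1)/2"
      "complex_of_real x4 = (2*(of_real b + of_real c)-of_real r+of_real u2)/2"
      "complex_of_real x3 = (2*(of_real b + of_real c)-of_real r-of_real u2)/2"
      unfolding x1_def x2_def x3_def x4_def s_def by simp_all
    have key: "eigenvalue (map_mat complex_of_real (M5 a b c e)) \<mu> \<longleftrightarrow>
       (\<mu>-1)*((\<mu>-of_real x1)*(\<mu>-of_real x2))*((\<mu>-of_real x4)*(\<mu>-of_real x3)) = 0" for \<mu>
      unfolding eig_iff[OF h(1)] factor[OF R U1 U2] cx by (rule refl)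
    show ?thesis unfolding key by auto
  qed
  show ?thesis
    unfolding Let_def trs Meq Lam
  proof (intro exI[of _ "[x1,x2,x3,x4,1]"] conjI)
    show "length [x1,x2,x3,x4,1] = 5" by simp
    show "distinct (map abs [x1,x2,x3,x4,1])" using absx o1 o2 o5 o6 o4 by auto
    show "distinct [x1,x2,x3,x4,1]" using o1 o2 o3 o4 o5 o6 x1pos by auto
    show "{\<mu>. eigenvalue (map_mat complex_of_real (M5 a b c e)) \<mu>} = complex_of_real ` set [x1,x2,x3,x4,1]"
      by (rule eig)
    show "x1 \<in> set [x1,x2,x3,x4,1]" by simp
    show "\<forall>\<mu>\<in>set [x1,x2,x3,x4,1]. \<bar>\<mu>\<bar> \<le> \<bar>x1\<bar>" using absx o1 o2 o5 o6 o4 by auto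
  qed
qed

end
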